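(* For any mechanism $(q_i,P_i)_{i\in\mathcal I}$ (with opt-out messages) and any nonnegative numbers $\alpha_i(m_i'\mid m_i)\ge 0$, $i\in\mathcal I$, $(m_i,m_i')\in M_i\times M_i$, we have for every $v\in V$: $$\min_{m\in M}\mathrm{Rev}(v,m)\le v.$$ In particular $\sum_v p(v)\min_m\mathrm{Rev}(v,m)\le\sum_v v\,p(v)$.
   Context: A mechanism for buyers $\mathcal I=\{1,\ldots,I\}$ with common value $v\in V=\{0,\nu,\ldots,1\}$ consists of finite message sets $M_i$ ($M=\prod_iM_i$), allocation rules $q_i:M\to[0,1]$ with $\sum_iq_i(m)\le1$, and payment rules $P_i:M\to\mathbb R$, where each $M_i$ contains an opt-out message $0$ with $q_i(0,m_{-i})=P_i(0,m_{-i})=0$ for all $m_{-i}$. $U_i(v,m)=v\,q_i(m)-P_i(m)$. Virtual revenue: $\mathrm{Rev}(v,m)=\sum_i\Big(P_i(m)+\sum_{m_i'\in M_i}\big(U_i(v,(m_i',m_{-i}))-U_i(v,m)\big)\alpha_i(m_i'\mid m_i)\Big)$. *)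

theory Defs
  imports Complex_Main "HOL-Library.FuncSet"
begin

definition Vgrid :: "nat \<Rightarrow> real set" where
  "Vgrid K = {real k / real K | k. k \<le> K}"

definition profiles :: "nat \<Rightarrow> (nat \<Rightarrow> 'm set) \<Rightarrow> (nat \<Rightarrow> 'm) set" where
  "profiles I M = Pi\<^sub>E {1..I} M"

definition is_mechanism ::
  "nat \<Rightarrow> (nat \<Rightarrow> 'm set) \<Rightarrow> (nat \<Rightarrow> 'm) \<Rightarrow> (nat \<Rightarrow> (nat \<Rightarrow> 'm) \<Rightarrow> real)
     \<Rightarrow> (nat \<Rightarrow> (nat \<Rightarrow> 'm) \<Rightarrow> real) \<Rightarrow> bool" where
  "is_mechanism I M z q P \<longleftrightarrow>
     (\<forall>i\<in>{1..I}. finite (M i) \<and> z i \<in> M i) \<and>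
     (\<forall>m\<in>profiles I M. (\<forall>i\<in>{1..I}. 0 \<le> q i m \<and> q i m \<le> 1) \<and> (\<Sum>i\<in>{1..I}. q i m) \<le> 1) \<and>
     (\<forall>m\<in>profiles I M. \<forall>i\<in>{1..I}. q i (m(i := z i)) = 0 \<and> P i (m(i := z i)) = 0)"

definition util :: "(nat \<Rightarrow> (nat \<Rightarrow> 'm) \<Rightarrow> real) \<Rightarrow> (nat \<Rightarrow> (nat \<Rightarrow> 'm) \<Rightarrow> real)
     \<Rightarrow> nat \<Rightarrow> real \<Rightarrow> (nat \<Rightarrow> 'm) \<Rightarrow> real" where
  "util q P i v m = v * q i m - P i m"

text \<open>Virtual revenue; alpha i m' mi stands for alpha_i(m' | mi).\<close>
definition Rev :: "nat \<Rightarrow> (nat \<Rightarrow> 'm set) \<Rightarrow> (nat \<Rightarrow> (nat \<Rightarrow> 'm) \<Rightarrow> real)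
     \<Rightarrow> (nat \<Rightarrow> (nat \<Rightarrow> 'm) \<Rightarrow> real) \<Rightarrow> (nat \<Rightarrow> 'm \<Rightarrow> 'm \<Rightarrow> real) \<Rightarrow> real \<Rightarrow> (nat \<Rightarrow> 'm) \<Rightarrow> real" where
  "Rev I M q P \<alpha> v m = (\<Sum>i\<in>{1..I}. P i m +
      (\<Sum>m'\<in>M i. (util q P i v (m(i := m')) - util q P i v m) * \<alpha> i m' (m i)))"

end

theory Submission
  imports Defs
begin

lemma stat:
  fixes a :: "'a \<Rightarrow> 'a \<Rightarrow> real"
  assumes "finite S" "S \<noteq> {}" "\<forall>x\<in>S. \<forall>y\<in>S. a x y \<ge> 0"
  shows "\<exists>\<mu>. (\<forall>x\<in>S. \<mu> x \<ge> 0) \<and> sum \<mu> S > 0 \<and>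
     (\<forall>W. (\<Sum>x\<in>S. \<mu> x * (\<Sum>y\<in>S. a x y * (W y - W x))) = 0)"
  using assms
proof (induction S arbitrary: a rule: finite_ne_induct)
  case (singleton x)
  show ?case by (rule exI[of _ "\<lambda>_. 1"]) simp
next
  case (insert s F)
  define A where "A = (\<Sum>y\<in>F. a s y)"
  have A0: "A \<ge> 0" unfolding A_def using insert.prems by (auto intro: sum_nonneg)
  show ?case
  proof (cases "A = 0")
    case True
    have z: "\<forall>y\<in>F. a s y = 0" using True insert.prems insert.hyps(1)
      unfolding A_def by (subst (asm) sum_nonneg_eq_0_iff) auto
    show ?thesis
      apply (rule exI[of _ "\<lambda>x. if x = s then 1 else 0"])
      proof (intro conjI allI)
        fix W
        have "(\<Sum>x\<in>F. (if x = s then 1 else 0) * ((\<Sum>y\<in>insert s F. a x y * (W y - W x)))) = (0::real)"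
          using insert.hyps by (intro sum.neutral) auto
        then show "(\<Sum>x\<in>insert s F. (if x = s then 1 else 0) * (\<Sum>y\<in>insert s F. a x y * (W y - W x))) = 0"
          using z insert.hyps by simp
      qed (use insert.hyps in auto)
  next
    case False
    hence Ap: "A > 0" using A0 by simp
    define a' where "a' x y = a x y + a x s * a s y / A" for x y
    have "\<forall>x\<in>F. \<forall>y\<in>F. a' x y \<ge> 0" unfolding a'_def using insert.prems Ap
      by (auto intro!: add_nonneg_nonneg divide_nonneg_pos mult_nonneg_nonneg)
    from insert.IH[OF this] obtain \<mu>' where
      mu1: "\<forall>x\<in>F. \<mu>' x \<ge> 0" and mu2: "sum \<mu>' F > 0" and
      mu3: "\<And>W. (\<Sum>x\<in>F. \<mu>' x * (\<Sum>y\<in>F. a' x y * (W y - W x))) = 0" by blast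
    define c where "c = (\<Sum>x\<in>F. \<mu>' x * a x s) / A"
    have c0: "c \<ge> 0" unfolding c_def using mu1 insert.prems Ap
      by (auto intro!: divide_nonneg_pos sum_nonneg)
    define \<mu> where "\<mu> = \<mu>'(s := c)"
    have G: "(\<Sum>x\<in>insert s F. \<mu> x * (\<Sum>y\<in>insert s F. a x y * (W y - W x))) = 0" for W
    proof -
      define B where "B = (\<Sum>y\<in>F. a s y * (W y - W s))"
      have e1: "(\<Sum>y\<in>F. a s y * (W y - W x)) = B + A * (W s - W x)" for x
        unfolding B_def A_def by (simp add: sum_distrib_right sum_distrib_left[symmetric] algebra_simps sum.distrib sum_subtractf)
      have "(\<Sum>y\<in>F. a' x y * (W y - W x)) = (\<Sum>y\<in>F. a x y * (W y - W x)) + a x s / A * (\<Sum>y\<in>F. a s y * (W y - W x))" for x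
        unfolding a'_def sum_distrib_left sum.distrib[symmetric] by (rule sum.cong) (auto simp: algebra_simps diff_divide_distrib)
      also have "\<dots> x = (\<Sum>y\<in>F. a x y * (W y - W x)) + a x s * (W s - W x) + a x s * B / A" for x
        using Ap by (simp only: e1) (simp add: field_simps)
      finally have e2: "(\<Sum>y\<in>F. a' x y * (W y - W x)) = (\<Sum>y\<in>F. a x y * (W y - W x)) + a x s * (W s - W x) + a x s * B / A" for x .
      have "0 = (\<Sum>x\<in>F. \<mu>' x * ((\<Sum>y\<in>F. a x y * (W y - W x)) + a x s * (W s - W x))) + c * B"
      proof -
        have h: "(\<Sum>x\<in>F. \<mu>' x * (a x s * B / A)) = c * B"
          unfolding c_def by (simp add: sum_divide_distrib sum_distrib_right mult.assoc)
        have "0 = (\<Sum>x\<in>F. \<mu>' x * (((\<Sum>y\<in>F. a x y * (W y - W x)) + a x s * (W s - W x)) + a x s * B / A))"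
          using mu3[of W] unfolding e2 by simp
        also have "\<dots> = (\<Sum>x\<in>F. \<mu>' x * ((\<Sum>y\<in>F. a x y * (W y - W x)) + a x s * (W s - W x))) + (\<Sum>x\<in>F. \<mu>' x * (a x s * B / A))"
          by (simp add: distrib_left sum.distrib)
        finally show ?thesis using h by simp
      qed
      moreover have "(\<Sum>x\<in>insert s F. \<mu> x * (\<Sum>y\<in>insert s F. a x y * (W y - W x))) =
          c * B + (\<Sum>x\<in>F. \<mu>' x * ((\<Sum>y\<in>F. a x y * (W y - W x)) + a x s * (W s - W x)))"
      proof -
        have "(\<Sum>x\<in>F. \<mu> x * (\<Sum>y\<in>insert s F. a x y * (W y - W x))) = (\<Sum>x\<in>F. \<mu>' x * ((\<Sum>y\<in>F. a x y * (W y - W x)) + a x s * (W s - W x)))"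
          using insert.hyps unfolding \<mu>_def by (intro sum.cong) auto
        then show ?thesis using insert.hyps unfolding B_def \<mu>_def by simp
      qed
      ultimately show ?thesis by linarith
    qed
    have sF: "sum \<mu> F = sum \<mu>' F" unfolding \<mu>_def using insert.hyps by (intro sum.cong) auto
    show ?thesis
      apply (rule exI[of _ \<mu>])
      using G mu1 mu2 c0 insert.hyps sF by (auto simp: \<mu>_def)
  qed
qed

lemma split_PiE:
  assumes "finite J" "i \<in> J"
  shows "(\<Sum>m\<in>Pi\<^sub>E J M. (F m :: real)) = (\<Sum>x\<in>M i. \<Sum>r\<in>Pi\<^sub>E (J - {i}) M. F (r(i := x)))"
proof -
  have "(\<Sum>m\<in>Pi\<^sub>E J M. F m) = (\<Sum>(x,r)\<in>M i \<times> Pi\<^sub>E (J - {i}) M. F (r(i := x)))"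
    using assms
    by (intro sum.reindex_bij_witness[of _ "\<lambda>(x,r). r(i := x)" "\<lambda>g. (g i, g(i := undefined))"])
       (auto simp: PiE_def extensional_def Pi_def)
  also have "\<dots> = (\<Sum>x\<in>M i. \<Sum>r\<in>Pi\<^sub>E (J - {i}) M. F (r(i := x)))"
    by (subst sum.cartesian_product) auto
  finally show ?thesis .
qed

lemma product_stationary:
  fixes \<mu> :: "nat \<Rightarrow> 'm \<Rightarrow> real" and a :: "'m \<Rightarrow> 'm \<Rightarrow> real"
  assumes J: "finite J" "i \<in> J" and fin: "finite (M i)"
    and st: "\<And>W. (\<Sum>x\<in>M i. \<mu> i x * (\<Sum>y\<in>M i. a x y * (W y - W x))) = 0"
  shows "(\<Sum>m\<in>Pi\<^sub>E J M. (\<Prod>j\<in>J. \<mu> j (m j)) * (\<Sum>y\<in>M i. a (m i) y * (g (m(i := y)) - g m))) = 0"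
proof -
  define w' where "w' r = (\<Prod>j\<in>J - {i}. \<mu> j (r j))" for r :: "nat \<Rightarrow> 'm"
  have wsplit: "(\<Prod>j\<in>J. \<mu> j ((r(i := x)) j)) = \<mu> i x * w' r" for r x
  proof -
    have "(\<Prod>j\<in>J. \<mu> j ((r(i := x)) j)) = \<mu> i x * (\<Prod>j\<in>J - {i}. \<mu> j ((r(i := x)) j))"
      using J by (subst prod.remove[of J i]) auto
    also have "(\<Prod>j\<in>J - {i}. \<mu> j ((r(i := x)) j)) = w' r"
      unfolding w'_def by (intro prod.cong) auto
    finally show ?thesis .
  qed
  have "(\<Sum>m\<in>Pi\<^sub>E J M. (\<Prod>j\<in>J. \<mu> j (m j)) * (\<Sum>y\<in>M i. a (m i) y * (g (m(i := y)) - g m)))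
     = (\<Sum>x\<in>M i. \<Sum>r\<in>Pi\<^sub>E (J - {i}) M. \<mu> i x * w' r * (\<Sum>y\<in>M i. a x y * (g (r(i := y)) - g (r(i := x)))))"
    unfolding split_PiE[OF J] by (simp only: wsplit fun_upd_upd fun_upd_same)
  also have "\<dots> = (\<Sum>r\<in>Pi\<^sub>E (J - {i}) M. w' r * (\<Sum>x\<in>M i. \<mu> i x * (\<Sum>y\<in>M i. a x y * (g (r(i := y)) - g (r(i := x))))))"
    by (subst sum.swap) (simp add: sum_distrib_left mult_ac)
  also have "\<dots> = 0"
    using st[of "\<lambda>y. g (r(i := y))" for r] by simp
  finally show ?thesis .
qed

theorem lemma1:
  fixes I K :: nat and M :: "nat \<Rightarrow> 'm set" and z :: "nat \<Rightarrow> 'm"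
    and q P :: "nat \<Rightarrow> (nat \<Rightarrow> 'm) \<Rightarrow> real"
    and \<alpha> :: "nat \<Rightarrow> 'm \<Rightarrow> 'm \<Rightarrow> real" and p :: "real \<Rightarrow> real"
  assumes "K \<ge> 1"
    and "is_mechanism I M z q P"
    and "\<forall>i\<in>{1..I}. \<forall>mi\<in>M i. \<forall>mi'\<in>M i. \<alpha> i mi' mi \<ge> 0"
    and "\<forall>v\<in>Vgrid K. p v \<ge> 0"
  shows "(\<forall>v\<in>Vgrid K. Min (Rev I M q P \<alpha> v ` profiles I M) \<le> v) \<and>
         (\<Sum>v\<in>Vgrid K. p v * Min (Rev I M q P \<alpha> v ` profiles I M)) \<le> (\<Sum>v\<in>Vgrid K. v * p v)"
proof -
  define J where "J = {1..I}"
  have finJ: "finite J" unfolding J_def by simp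
  have mech: "\<forall>i\<in>J. finite (M i) \<and> z i \<in> M i"
    "\<forall>m\<in>Pi\<^sub>E J M. (\<forall>i\<in>J. 0 \<le> q i m \<and> q i m \<le> 1) \<and> (\<Sum>i\<in>J. q i m) \<le> 1"
    "\<forall>m\<in>Pi\<^sub>E J M. \<forall>i\<in>J. q i (m(i := z i)) = 0 \<and> P i (m(i := z i)) = 0"
    using assms(2) unfolding is_mechanism_def profiles_def J_def by auto
  define a where "a i x y = \<alpha> i y x + (if y = z i then 1 else 0)" for i x y
  have "\<forall>i\<in>J. \<exists>\<mu>. (\<forall>x\<in>M i. \<mu> x \<ge> 0) \<and> sum \<mu> (M i) > 0 \<and>
     (\<forall>W. (\<Sum>x\<in>M i. \<mu> x * (\<Sum>y\<in>M i. a i x y * (W y - W x))) = 0)"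
  proof
    fix i assume i: "i \<in> J"
    show "\<exists>\<mu>. (\<forall>x\<in>M i. \<mu> x \<ge> 0) \<and> sum \<mu> (M i) > 0 \<and>
     (\<forall>W. (\<Sum>x\<in>M i. \<mu> x * (\<Sum>y\<in>M i. a i x y * (W y - W x))) = 0)"
      using i mech(1) assms(3) unfolding J_def[symmetric]
      by (intro stat) (auto simp: a_def add_nonneg_nonneg)
  qed
  from bchoice[OF this] obtain \<mu> where mu0: "\<forall>i\<in>J. (\<forall>x\<in>M i. \<mu> i x \<ge> 0) \<and> sum (\<mu> i) (M i) > 0 \<and>
     (\<forall>W. (\<Sum>x\<in>M i. \<mu> i x * (\<Sum>y\<in>M i. a i x y * (W y - W x))) = 0)"
    by blast
  have mu: "\<And>i. i \<in> J \<Longrightarrow> (\<forall>x\<in>M i. \<mu> i x \<ge> 0) \<and> sum (\<mu> i) (M i) > 0 \<and>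
     (\<forall>W. (\<Sum>x\<in>M i. \<mu> i x * (\<Sum>y\<in>M i. a i x y * (W y - W x))) = 0)"
    using mu0 by blast
  define w where "w m = (\<Prod>j\<in>J. \<mu> j (m j))" for m :: "nat \<Rightarrow> 'm"
  have w0: "w m \<ge> 0" if "m \<in> Pi\<^sub>E J M" for m
    unfolding w_def using mu that by (auto intro!: prod_nonneg)
  have wsum: "sum w (Pi\<^sub>E J M) > 0"
  proof -
    have "sum w (Pi\<^sub>E J M) = (\<Prod>j\<in>J. \<Sum>y\<in>M j. \<mu> j y)"
      unfolding w_def using finJ mech(1) by (subst prod_sum_PiE) auto
    also have "\<dots> > 0" using mu by (intro prod_pos) auto
    finally show ?thesis .
  qed
  have finProf: "finite (Pi\<^sub>E J M)" using finJ mech(1) by (intro finite_PiE) auto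
  have neProf: "Pi\<^sub>E J M \<noteq> {}" using mech(1) by (auto simp: PiE_eq_empty_iff)
  have part1: "Min (Rev I M q P \<alpha> v ` profiles I M) \<le> v" if v0: "v \<ge> 0" for v
  proof -
    let ?U = "\<lambda>i. util q P i v"
    have RevEq: "Rev I M q P \<alpha> v m = v * (\<Sum>i\<in>J. q i m) +
        (\<Sum>i\<in>J. \<Sum>y\<in>M i. a i (m i) y * (?U i (m(i := y)) - ?U i m))" if m: "m \<in> Pi\<^sub>E J M" for m
    proof -
      have "(\<Sum>y\<in>M i. a i (m i) y * (?U i (m(i := y)) - ?U i m)) =
         (\<Sum>y\<in>M i. (?U i (m(i := y)) - ?U i m) * \<alpha> i y (m i)) - ?U i m" if i: "i \<in> J" for i
      proof -
        have "(\<Sum>y\<in>M i. a i (m i) y * (?U i (m(i := y)) - ?U i m)) =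
           (\<Sum>y\<in>M i. (?U i (m(i := y)) - ?U i m) * \<alpha> i y (m i)) +
           (\<Sum>y\<in>M i. (if y = z i then 1 else 0) * (?U i (m(i := y)) - ?U i m))"
          unfolding a_def sum.distrib[symmetric] by (rule sum.cong) (simp_all add: algebra_simps)
        also have "(\<Sum>y\<in>M i. (if y = z i then 1 else 0) * (?U i (m(i := y)) - ?U i m)) = ?U i (m(i := z i)) - ?U i m"
        proof -
          have "(\<Sum>y\<in>M i. (if y = z i then 1 else 0) * (?U i (m(i := y)) - ?U i m)) = (\<Sum>y\<in>M i. if y = z i then ?U i (m(i := y)) - ?U i m else 0)"
            by (rule sum.cong) auto
          also have "\<dots> = ?U i (m(i := z i)) - ?U i m" using mech(1) i by (simp add: sum.delta)
          finally show ?thesis .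
        qed
        also have "?U i (m(i := z i)) = 0" using mech(3) m i by (simp add: util_def)
        finally show ?thesis by linarith
      qed
      then have "(\<Sum>i\<in>J. \<Sum>y\<in>M i. a i (m i) y * (?U i (m(i := y)) - ?U i m)) =
         (\<Sum>i\<in>J. (\<Sum>y\<in>M i. (?U i (m(i := y)) - ?U i m) * \<alpha> i y (m i)) - ?U i m)"
        by (rule sum.cong[OF refl])
      then show ?thesis unfolding Rev_def J_def[symmetric]
        by (simp add: util_def sum.distrib sum_subtractf sum_distrib_left algebra_simps)
    qed
    have zero: "(\<Sum>m\<in>Pi\<^sub>E J M. w m * (\<Sum>y\<in>M i. a i (m i) y * (?U i (m(i := y)) - ?U i m))) = 0"
      if i: "i \<in> J" for i
      unfolding w_def using finJ i mech(1) mu[OF i]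
      by (intro product_stationary[where \<mu> = \<mu>]) auto
    have "(\<Sum>m\<in>Pi\<^sub>E J M. w m * Rev I M q P \<alpha> v m) =
       (\<Sum>m\<in>Pi\<^sub>E J M. w m * (v * (\<Sum>i\<in>J. q i m))) +
       (\<Sum>i\<in>J. \<Sum>m\<in>Pi\<^sub>E J M. w m * (\<Sum>y\<in>M i. a i (m i) y * (?U i (m(i := y)) - ?U i m)))"
    proof -
      have "(\<Sum>m\<in>Pi\<^sub>E J M. w m * Rev I M q P \<alpha> v m) =
        (\<Sum>m\<in>Pi\<^sub>E J M. w m * (v * (\<Sum>i\<in>J. q i m)) +
          (\<Sum>i\<in>J. w m * (\<Sum>y\<in>M i. a i (m i) y * (?U i (m(i := y)) - ?U i m))))"
        by (intro sum.cong refl) (simp only: RevEq distrib_left sum_distrib_left)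
      also have "\<dots> = (\<Sum>m\<in>Pi\<^sub>E J M. w m * (v * (\<Sum>i\<in>J. q i m))) +
          (\<Sum>m\<in>Pi\<^sub>E J M. \<Sum>i\<in>J. w m * (\<Sum>y\<in>M i. a i (m i) y * (?U i (m(i := y)) - ?U i m)))"
        by (rule sum.distrib)
      also have "(\<Sum>m\<in>Pi\<^sub>E J M. \<Sum>i\<in>J. w m * (\<Sum>y\<in>M i. a i (m i) y * (?U i (m(i := y)) - ?U i m)))
          = (\<Sum>i\<in>J. \<Sum>m\<in>Pi\<^sub>E J M. w m * (\<Sum>y\<in>M i. a i (m i) y * (?U i (m(i := y)) - ?U i m)))"
        by (rule sum.swap)
      finally show ?thesis .
    qed
    also have "\<dots> = (\<Sum>m\<in>Pi\<^sub>E J M. w m * (v * (\<Sum>i\<in>J. q i m)))"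
      using zero by simp
    also have "\<dots> \<le> (\<Sum>m\<in>Pi\<^sub>E J M. w m * v)"
      using mech(2) w0 v0 by (intro sum_mono mult_left_mono) (auto intro: mult_left_le)
    finally have le: "(\<Sum>m\<in>Pi\<^sub>E J M. w m * Rev I M q P \<alpha> v m) \<le> v * sum w (Pi\<^sub>E J M)"
      by (simp add: sum_distrib_left mult.commute)
    define mn where "mn = Min (Rev I M q P \<alpha> v ` Pi\<^sub>E J M)"
    have "mn * sum w (Pi\<^sub>E J M) = (\<Sum>m\<in>Pi\<^sub>E J M. w m * mn)"
      by (simp add: sum_distrib_left mult.commute)
    also have "\<dots> \<le> (\<Sum>m\<in>Pi\<^sub>E J M. w m * Rev I M q P \<alpha> v m)"
      using w0 finProf unfolding mn_def by (intro sum_mono mult_left_mono) auto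
    finally have "mn * sum w (Pi\<^sub>E J M) \<le> v * sum w (Pi\<^sub>E J M)" using le by linarith
    then have "mn \<le> v" using wsum by simp
    then show ?thesis unfolding mn_def profiles_def J_def .
  qed
  have vpos: "v \<ge> 0" if "v \<in> Vgrid K" for v
    using that unfolding Vgrid_def by auto
  have A: "\<forall>v\<in>Vgrid K. Min (Rev I M q P \<alpha> v ` profiles I M) \<le> v"
    using part1 vpos by blast
  moreover have "(\<Sum>v\<in>Vgrid K. p v * Min (Rev I M q P \<alpha> v ` profiles I M)) \<le> (\<Sum>v\<in>Vgrid K. v * p v)"
  proof (rule sum_mono)
    fix v assume v: "v \<in> Vgrid K"
    have "p v * Min (Rev I M q P \<alpha> v ` profiles I M) \<le> p v * v"
      using A assms(4) v by (intro mult_left_mono) auto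
    then show "p v * Min (Rev I M q P \<alpha> v ` profiles I M) \<le> v * p v" by (simp add: mult.commute)
  qed
  ultimately show ?thesis by blast
qed

end
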